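(* Let $k \subseteq K$ be fields and $d \geqslant 1$. If $K$ is closed at level $d$ (over $k$), then $K$ is perfect and solvably closed, i.e. $K$ has no nontrivial finite solvable (in particular, no nontrivial finite Galois extension with solvable Galois group) and no nontrivial purely inseparable extensions.
   Context: For fields $k \subseteq K$ and a finite-dimensional $K$-algebra $A$, $A$ descends to an intermediate field $k \subseteq K_0 \subseteq K$ if there is a $K_0$-algebra $A_0$ with $A \simeq A_0 \otimes_{K_0} K$; $\operatorname{ed}_k(A/K)$ is the minimum of $\operatorname{trdeg}_k(K_0)$ over such $K_0$. For a finite field extension $L/K$, $\operatorname{lev}_k(L/K)$ is the smallest $d \geq 0$ such that there is a tower $K = K_0 \subseteq \dots \subseteq K_m$ of finite field extensions with $\operatorname{ed}_k(K_i/K_{i-1}) \leq d$ for all $i$ and $L$ embedding into $K_m$ over $K$. The level $d$ closure $K^{(d)}$ of $K$ in an algebraic closure $\overline{K}$ is the compositum of all intermediate fields $K \subseteq L \subseteq \overline{K}$ with $[L:K]<\infty$ and $\operatorname{lev}_k(L/K) \leq d$; $K$ is closed at level $d$ if $K = K^{(d)}$. A finite extension $L/K$ is called solvable if $L$ embeds over $K$ into the top of a tower $K=K_0\subseteq\dots\subseteq K_m$ with each $K_i=K_{i-1}(\lambda_i)$, $\lambda_i$ a root of a polynomial $x^{n_i}-a_i$ or $x^{n_i}-x-a_i$ with $a_i\in K_{i-1}$; $K$ is solvably closed if it has no nontrivial solvable extensions. *)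

theory Defs
  imports "HOL-Algebra.Algebraic_Closure" "HOL-Algebra.Generated_Fields" "HOL-Library.Extended_Nat" "HOL-Computational_Algebra.Primes"
begin

text \<open>All fields live inside a fixed ambient field Omega (an algebraic closure of K).
  Subfields are subsets of its carrier.\<close>

definition fin_ext :: "('a, 'b) ring_scheme \<Rightarrow> 'a set \<Rightarrow> 'a set \<Rightarrow> bool" where
  "fin_ext \<Omega> F L \<longleftrightarrow> subfield F \<Omega> \<and> subfield L \<Omega> \<and> F \<subseteq> L \<and> ring.finite_dimension \<Omega> F L"

text \<open>Algebraic independence over k of a finite set S: no nontrivial k-linear relation
  among distinct monomials in the elements of S (monomials are given by exponent functions
  supported in S).\<close>
definition alg_indep :: "('a, 'b) ring_scheme \<Rightarrow> 'a set \<Rightarrow> 'a set \<Rightarrow> bool" where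
  "alg_indep \<Omega> k S \<longleftrightarrow> finite S \<and> S \<subseteq> carrier \<Omega> \<and>
     (\<forall>(E :: ('a \<Rightarrow> nat) set) c. finite E \<and> (\<forall>e\<in>E. \<forall>x. x \<notin> S \<longrightarrow> e x = 0) \<and> c \<in> E \<rightarrow> k \<and>
        finsum \<Omega> (\<lambda>e. c e \<otimes>\<^bsub>\<Omega>\<^esub> finprod \<Omega> (\<lambda>s. s [^]\<^bsub>\<Omega>\<^esub> (e s)) S) E = \<zero>\<^bsub>\<Omega>\<^esub>
        \<longrightarrow> (\<forall>e\<in>E. c e = \<zero>\<^bsub>\<Omega>\<^esub>))"

definition trdeg :: "('a, 'b) ring_scheme \<Rightarrow> 'a set \<Rightarrow> 'a set \<Rightarrow> enat" where
  "trdeg \<Omega> k F = (SUP S \<in> {S. S \<subseteq> F \<and> alg_indep \<Omega> k S}. enat (card S))"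

text \<open>The finite extension L of F descends to the intermediate field K0: there is a
  K0-algebra A0 (realised as a unital K0-subalgebra B of L) such that the natural map
  A0 (tensor over K0) F \<rightarrow> L is an isomorphism, i.e. a K0-basis of B is an F-basis of L.\<close>
definition descends :: "('a, 'b) ring_scheme \<Rightarrow> 'a set \<Rightarrow> 'a set \<Rightarrow> 'a set \<Rightarrow> bool" where
  "descends \<Omega> F L K0 \<longleftrightarrow> (\<exists>B bs. B \<subseteq> L \<and> \<one>\<^bsub>\<Omega>\<^esub> \<in> B \<and>
      (\<forall>x\<in>B. \<forall>y\<in>B. x \<oplus>\<^bsub>\<Omega>\<^esub> y \<in> B \<and> x \<otimes>\<^bsub>\<Omega>\<^esub> y \<in> B) \<and>
      (\<forall>a\<in>K0. \<forall>x\<in>B. a \<otimes>\<^bsub>\<Omega>\<^esub> x \<in> B) \<and>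
      set bs \<subseteq> B \<and> ring.independent \<Omega> K0 bs \<and> ring.Span \<Omega> K0 bs = B \<and>
      ring.independent \<Omega> F bs \<and> ring.Span \<Omega> F bs = L)"

definition ed :: "('a, 'b) ring_scheme \<Rightarrow> 'a set \<Rightarrow> 'a set \<Rightarrow> 'a set \<Rightarrow> enat" where
  "ed \<Omega> k F L = (INF K0 \<in> {K0. subfield K0 \<Omega> \<and> k \<subseteq> K0 \<and> K0 \<subseteq> F \<and> descends \<Omega> F L K0}.
                    trdeg \<Omega> k K0)"

definition embeds_over :: "('a, 'b) ring_scheme \<Rightarrow> 'a set \<Rightarrow> 'a set \<Rightarrow> 'a set \<Rightarrow> bool" where
  "embeds_over \<Omega> K L M \<longleftrightarrow> (\<exists>\<sigma>. \<sigma> \<in> ring_hom (\<Omega>\<lparr>carrier := L\<rparr>) \<Omega> \<and> (\<forall>x\<in>K. \<sigma> x = x) \<and> \<sigma> ` L \<subseteq> M)"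

text \<open>Level lev_k(L/K) (infinite if no tower exists).\<close>
definition lev :: "('a, 'b) ring_scheme \<Rightarrow> 'a set \<Rightarrow> 'a set \<Rightarrow> 'a set \<Rightarrow> enat" where
  "lev \<Omega> k K L = Inf {enat d | d. \<exists>(m::nat) (Ks :: nat \<Rightarrow> 'a set). Ks 0 = K \<and>
      (\<forall>i\<in>{1..m}. fin_ext \<Omega> (Ks (i - 1)) (Ks i) \<and> ed \<Omega> k (Ks (i - 1)) (Ks i) \<le> enat d) \<and>
      embeds_over \<Omega> K L (Ks m)}"

definition level_closure :: "('a, 'b) ring_scheme \<Rightarrow> 'a set \<Rightarrow> 'a set \<Rightarrow> nat \<Rightarrow> 'a set" where
  "level_closure \<Omega> k K d = generate_field \<Omega> (\<Union>{L. fin_ext \<Omega> K L \<and> lev \<Omega> k K L \<le> enat d})"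

definition closed_at_level :: "('a, 'b) ring_scheme \<Rightarrow> 'a set \<Rightarrow> 'a set \<Rightarrow> nat \<Rightarrow> bool" where
  "closed_at_level \<Omega> k K d \<longleftrightarrow> K = level_closure \<Omega> k K d"

text \<open>Solvable finite extension (radical / Artin-Schreier type towers).\<close>
definition solvable_ext :: "('a, 'b) ring_scheme \<Rightarrow> 'a set \<Rightarrow> 'a set \<Rightarrow> bool" where
  "solvable_ext \<Omega> K L \<longleftrightarrow> (\<exists>(m::nat) (Ks :: nat \<Rightarrow> 'a set) lam a (n :: nat \<Rightarrow> nat). Ks 0 = K \<and>
      (\<forall>i\<in>{1..m}. lam i \<in> carrier \<Omega> \<and> a i \<in> Ks (i - 1) \<and>
         Ks i = generate_field \<Omega> (insert (lam i) (Ks (i - 1))) \<and>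
         ((n i \<ge> 1 \<and> lam i [^]\<^bsub>\<Omega>\<^esub> n i \<ominus>\<^bsub>\<Omega>\<^esub> a i = \<zero>\<^bsub>\<Omega>\<^esub>) \<or>
          (n i \<ge> 2 \<and> lam i [^]\<^bsub>\<Omega>\<^esub> n i \<ominus>\<^bsub>\<Omega>\<^esub> lam i \<ominus>\<^bsub>\<Omega>\<^esub> a i = \<zero>\<^bsub>\<Omega>\<^esub>))) \<and>
      embeds_over \<Omega> K L (Ks m))"

definition solvably_closed :: "('a, 'b) ring_scheme \<Rightarrow> 'a set \<Rightarrow> bool" where
  "solvably_closed \<Omega> K \<longleftrightarrow> (\<forall>L. fin_ext \<Omega> K L \<and> solvable_ext \<Omega> K L \<longrightarrow> L = K)"

definition perfect :: "('a, 'b) ring_scheme \<Rightarrow> 'a set \<Rightarrow> bool" where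
  "perfect \<Omega> K \<longleftrightarrow> (\<forall>p::nat. Factorial_Ring.prime p \<and> add_pow \<Omega> p \<one>\<^bsub>\<Omega>\<^esub> = \<zero>\<^bsub>\<Omega>\<^esub> \<longrightarrow>
                       (\<forall>x\<in>K. \<exists>y\<in>K. y [^]\<^bsub>\<Omega>\<^esub> p = x))"

end

theory Submission
  imports Defs
begin


context field begin

lemma gen_simple:
  assumes "subfield F R" "x \<in> carrier R" "(algebraic over F) x"
  shows "generate_field R (insert x F) = simple_extension F x"
proof -
  have sub: "subfield (simple_extension F x) R"
    using simple_extension_is_subfield[OF assms(1,2)] assms(3) by simp
  have Fc: "F \<subseteq> carrier R" using subfieldE(3)[OF assms(1)] .
  show ?thesis
  proof (rule generate_fieldI[symmetric])
    show "insert x F \<subseteq> carrier R" using Fc assms(2) by auto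
    show "subfield (simple_extension F x) R" by (rule sub)
    show "insert x F \<subseteq> simple_extension F x"
      using simple_extension_incl[OF Fc assms(2)] simple_extension_mem[OF subfieldE(1)[OF assms(1)] assms(2)] by auto
    fix K' assume "subfield K' R" "insert x F \<subseteq> K'"
    then show "simple_extension F x \<subseteq> K'"
      using simple_extension_subring_incl[OF subfieldE(1)[OF \<open>subfield K' R\<close>]] by auto
  qed
qed

lemma tower_alg:
  assumes F1: "subfield F1 R" and k: "subfield k R" "k \<subseteq> F1"
    and a: "a \<in> carrier R" "(algebraic over F1) a"
    and s: "s \<in> carrier R" "(algebraic over (generate_field R (insert a k))) s"
  shows "(algebraic over F1) s"
proof -
  define F2 where "F2 = simple_extension F1 a"
  have F2: "subfield F2 R" unfolding F2_def using simple_extension_is_subfield[OF F1 a(1)] a(2) by simp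
  have fd2: "finite_dimension F1 F2" unfolding F2_def
    using finite_dimension_simple_extension[OF F1 a(1)] a(2) by simp
  have F1c: "F1 \<subseteq> carrier R" using subfieldE(3)[OF F1] .
  have "insert a k \<subseteq> F2" unfolding F2_def
    using simple_extension_incl[OF F1c a(1)] simple_extension_mem[OF subfieldE(1)[OF F1] a(1)] k(2) by auto
  hence "generate_field R (insert a k) \<subseteq> F2"
    using generate_field_min_subfield1[OF _ F2] a(1) subfieldE(3)[OF k(1)] by auto
  hence s2: "(algebraic over F2) s" using algebraic_mono s(2) by blast
  define F3 where "F3 = simple_extension F2 s"
  have fd3: "finite_dimension F2 F3" unfolding F3_def
    using finite_dimension_simple_extension[OF F2 s(1)] s2 by simp
  have "finite_dimension F1 F3" using telescopic_base_dim(1)[OF F1 F2 fd2 fd3] .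
  moreover have "subring F3 R" unfolding F3_def
    using simple_extension_is_subring[OF subfieldE(1)[OF F2] s(1)] .
  moreover have "s \<in> F3" unfolding F3_def using simple_extension_mem[OF subfieldE(1)[OF F2] s(1)] .
  ultimately show ?thesis using finite_dimension_imp_algebraic[OF F1] by blast
qed

lemma eval_rev_map:
  assumes "\<And>j. j < n \<Longrightarrow> f j \<in> carrier R" "y \<in> carrier R"
  shows "eval (rev (map f [0..<n])) y = (\<Oplus>j\<in>{..<n}. f j \<otimes> y [^] j)"
  using assms(1)
proof (induction n)
  case 0 then show ?case by simp
next
  case (Suc n)
  have c: "set (rev (map f [0..<n])) \<subseteq> carrier R" using Suc.prems by auto
  have "rev (map f [0..<Suc n]) = f n # rev (map f [0..<n])" by simp
  hence "eval (rev (map f [0..<Suc n])) y = f n \<otimes> y [^] n \<oplus> eval (rev (map f [0..<n])) y"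
    by simp
  also have "\<dots> = f n \<otimes> y [^] n \<oplus> (\<Oplus>j\<in>{..<n}. f j \<otimes> y [^] j)"
    using Suc by simp
  also have "\<dots> = (\<Oplus>j\<in>insert n {..<n}. f j \<otimes> y [^] j)"
    by (rule finsum_insert[symmetric]) (use Suc.prems assms(2) in auto)
  finally show ?case by (simp add: lessThan_Suc)
qed

lemma eval_coeff_sum:
  assumes "set p \<subseteq> carrier R" "y \<in> carrier R"
  shows "eval p y = (\<Oplus>j\<in>{..<length p}. coeff p j \<otimes> y [^] j)"
proof -
  have "p = rev (map (coeff p) [0..<length p])"
    using coeff_list[of p] by (simp add: rev_map)
  hence "eval p y = eval (rev (map (coeff p) [0..<length p])) y" by simp
  also have "\<dots> = (\<Oplus>j\<in>{..<length p}. coeff p j \<otimes> y [^] j)"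
    by (rule eval_rev_map) (use assms in auto)
  finally show ?thesis .
qed

end


context field begin

lemma subring_finsum_closed:
  assumes "subring S R" "finite I" "\<And>i. i \<in> I \<Longrightarrow> f i \<in> S"
  shows "finsum R f I \<in> S"
  using assms(2,3)
proof (induction I rule: finite_induct)
  case empty then show ?case using subringE(2)[OF assms(1)] by simp
next
  case (insert i I)
  have Sc: "S \<subseteq> carrier R" using subringE(1)[OF assms(1)] .
  have "finsum R f (insert i I) = f i \<oplus> finsum R f I"
    by (rule finsum_insert) (use insert Sc in auto)
  then show ?case using insert subringE(7)[OF assms(1)] by auto
qed

lemma subring_pow_closed:
  assumes "subring S R" "x \<in> S" shows "x [^] (i::nat) \<in> S"
proof (induction i)
  case 0 then show ?case using subringE(3)[OF assms(1)] by simp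
next
  case (Suc i)
  then show ?case using subringE(6)[OF assms(1)] assms(2) by simp
qed

lemma finsum_swap:
  fixes f :: "nat \<Rightarrow> nat \<Rightarrow> 'a" and m n :: nat
  assumes "\<And>i j. f i j \<in> carrier R"
  shows "(\<Oplus>j\<in>{..<m}. \<Oplus>i\<in>{..<n}. f i j) = (\<Oplus>i\<in>{..<n}. \<Oplus>j\<in>{..<m}. f i j)"
proof (induction m)
  case 0 then show ?case by (simp add: finsum_zero)
next
  case (Suc m)
  have "(\<Oplus>j\<in>{..<Suc m}. \<Oplus>i\<in>{..<n}. f i j) = (\<Oplus>i\<in>{..<n}. f i m) \<oplus> (\<Oplus>j\<in>{..<m}. \<Oplus>i\<in>{..<n}. f i j)"
    unfolding lessThan_Suc by (rule finsum_insert) (use assms in auto)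
  also have "\<dots> = (\<Oplus>i\<in>{..<n}. f i m) \<oplus> (\<Oplus>i\<in>{..<n}. \<Oplus>j\<in>{..<m}. f i j)" using Suc by simp
  also have "\<dots> = (\<Oplus>i\<in>{..<n}. f i m \<oplus> (\<Oplus>j\<in>{..<m}. f i j))"
    by (rule finsum_addf[symmetric]) (use assms in auto)
  also have "\<dots> = (\<Oplus>i\<in>{..<n}. \<Oplus>j\<in>{..<Suc m}. f i j)"
  proof (rule finsum_cong')
    fix i show "f i m \<oplus> (\<Oplus>j\<in>{..<m}. f i j) = (\<Oplus>j\<in>{..<Suc m}. f i j)"
      unfolding lessThan_Suc by (rule finsum_insert[symmetric]) (use assms in auto)
  qed (use assms in auto)
  finally show ?case .
qed

lemma finsum_extend_zero:
  fixes f :: "nat \<Rightarrow> 'a" and n N :: nat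
  assumes "N \<le> n" "\<And>i. N \<le> i \<Longrightarrow> i < n \<Longrightarrow> f i = \<zero>" "\<And>i. f i \<in> carrier R"
  shows "(\<Oplus>i\<in>{..<n}. f i) = (\<Oplus>i\<in>{..<N}. f i)"
  using assms(1,2)
proof (induction n rule: dec_induct)
  case base then show ?case by simp
next
  case (step n)
  have "(\<Oplus>i\<in>{..<Suc n}. f i) = f n \<oplus> (\<Oplus>i\<in>{..<n}. f i)"
    unfolding lessThan_Suc by (rule finsum_insert) (use assms in auto)
  also have "\<dots> = (\<Oplus>i\<in>{..<n}. f i)" using step assms(3) by simp
  finally show ?case using step by simp
qed

definition rel2 :: "'a set \<Rightarrow> 'a \<Rightarrow> 'a \<Rightarrow> bool" where
  "rel2 k x y \<longleftrightarrow> (\<exists>(C :: nat \<Rightarrow> nat \<Rightarrow> 'a) (n::nat) (m::nat). (\<forall>i j. C i j \<in> k) \<and> (\<exists>i<n. \<exists>j<m. C i j \<noteq> \<zero>) \<and>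
      (\<Oplus>j\<in>{..<m}. (\<Oplus>i\<in>{..<n}. C i j \<otimes> x [^] i) \<otimes> y [^] j) = \<zero>)"

lemma rel2_expand:
  fixes C :: "nat \<Rightarrow> nat \<Rightarrow> 'a" and n m :: nat
  assumes "\<And>i j. C i j \<in> carrier R" "x \<in> carrier R" "y \<in> carrier R"
  shows "(\<Oplus>j\<in>{..<m}. (\<Oplus>i\<in>{..<n}. C i j \<otimes> x [^] i) \<otimes> y [^] j)
       = (\<Oplus>j\<in>{..<m}. \<Oplus>i\<in>{..<n}. C i j \<otimes> x [^] i \<otimes> y [^] j)"
  by (rule finsum_cong') (auto intro!: finsum_ldistr simp: assms)

lemma rel2_sym:
  assumes "subfield k R" "x \<in> carrier R" "y \<in> carrier R" "rel2 k x y"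
  shows "rel2 k y x"
proof -
  obtain C :: "nat \<Rightarrow> nat \<Rightarrow> 'a" and n m :: nat where C: "\<forall>i j. C i j \<in> k" "\<exists>i<n. \<exists>j<m. C i j \<noteq> \<zero>"
     "(\<Oplus>j\<in>{..<m}. (\<Oplus>i\<in>{..<n}. C i j \<otimes> x [^] i) \<otimes> y [^] j) = \<zero>"
    using assms(4) unfolding rel2_def by blast
  have Cc: "\<And>i j. C i j \<in> carrier R" using C(1) subfieldE(3)[OF assms(1)] by auto
  have "(\<Oplus>i\<in>{..<n}. (\<Oplus>j\<in>{..<m}. C i j \<otimes> y [^] j) \<otimes> x [^] i)
      = (\<Oplus>i\<in>{..<n}. \<Oplus>j\<in>{..<m}. C i j \<otimes> y [^] j \<otimes> x [^] i)"
    using rel2_expand[where C="\<lambda>j i. C i j" and x=y and y=x and n=m and m=n] Cc assms by simp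
  also have "\<dots> = (\<Oplus>i\<in>{..<n}. \<Oplus>j\<in>{..<m}. C i j \<otimes> x [^] i \<otimes> y [^] j)"
    by (intro finsum_cong') (auto simp: Cc assms m_ac)
  also have "\<dots> = (\<Oplus>j\<in>{..<m}. \<Oplus>i\<in>{..<n}. C i j \<otimes> x [^] i \<otimes> y [^] j)"
    by (rule finsum_swap[symmetric]) (auto simp: Cc assms)
  also have "\<dots> = \<zero>" using C(3) rel2_expand[where C=C and x=x and y=y and n=n and m=m] Cc assms by simp
  finally show ?thesis unfolding rel2_def
    by (rule_tac x="\<lambda>j i. C i j" in exI, rule_tac x=m in exI, rule_tac x=n in exI) (use C in auto)
qed

lemma normalize_nonzero:
  assumes "c \<in> set p" "c \<noteq> \<zero>" shows "normalize p \<noteq> []"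
  using assms by (induction p) (auto split: if_splits)

lemma rel2_alg:
  assumes k: "subfield k R" and xy: "x \<in> carrier R" "y \<in> carrier R" and r: "rel2 k x y"
    and tr: "(transcendental over k) x"
  shows "(algebraic over (generate_field R (insert x k))) y"
proof -
  obtain C :: "nat \<Rightarrow> nat \<Rightarrow> 'a" and n m :: nat where C: "\<forall>i j. C i j \<in> k" "\<exists>i<n. \<exists>j<m. C i j \<noteq> \<zero>"
     "(\<Oplus>j\<in>{..<m}. (\<Oplus>i\<in>{..<n}. C i j \<otimes> x [^] i) \<otimes> y [^] j) = \<zero>"
    using r unfolding rel2_def by blast
  have kc: "k \<subseteq> carrier R" using subfieldE(3)[OF k] .
  have Cc: "\<And>i j. C i j \<in> carrier R" using C(1) kc by auto
  define F1 where "F1 = generate_field R (insert x k)"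
  have F1: "subfield F1 R" unfolding F1_def using generate_field_is_subfield kc xy by auto
  have kF1: "k \<subseteq> F1" "x \<in> F1" unfolding F1_def by (auto intro: generate_field.incl)
  define q where "q j = (\<Oplus>i\<in>{..<n}. C i j \<otimes> x [^] i)" for j
  have qF1: "q j \<in> F1" for j unfolding q_def
    apply (rule subring_finsum_closed[OF subfieldE(1)[OF F1]])
  proof -
    fix i
    have "C i j \<in> F1" using kF1 C(1) by blast
    moreover have "x [^] i \<in> F1" using subring_pow_closed[OF subfieldE(1)[OF F1] kF1(2)] .
    ultimately show "C i j \<otimes> x [^] i \<in> F1" using subringE(6)[OF subfieldE(1)[OF F1]] by blast
  qed simp
  have qc: "q j \<in> carrier R" for j using qF1 subfieldE(3)[OF F1] by auto
  have qeval: "q j = eval (rev (map (\<lambda>i. C i j) [0..<n])) x" for j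
    unfolding q_def using eval_rev_map[of n "\<lambda>i. C i j" x] Cc xy by simp
  obtain i0 j0 where ij0: "i0 < n" "j0 < m" "C i0 j0 \<noteq> \<zero>" using C(2) by blast
  have "q j0 \<noteq> \<zero>"
  proof
    assume q0: "q j0 = \<zero>"
    let ?p = "normalize (rev (map (\<lambda>i. C i j0) [0..<n]))"
    have "?p \<in> carrier (k[X])" unfolding sym[OF univ_poly_carrier]
      by (rule normalize_gives_polynomial) (use C(1) in auto)
    moreover have "eval ?p x = \<zero>"
      using eval_normalize[of "rev (map (\<lambda>i. C i j0) [0..<n])" x] Cc xy q0 qeval by auto
    ultimately have "?p = []" using eval_transcendental tr by blast
    moreover have "?p \<noteq> []" by (rule normalize_nonzero[of "C i0 j0"]) (use ij0 in auto)
    ultimately show False by simp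
  qed
  let ?P = "normalize (rev (map q [0..<m]))"
  have "?P \<in> carrier (F1[X])" unfolding sym[OF univ_poly_carrier]
    by (rule normalize_gives_polynomial) (use qF1 in auto)
  moreover have "?P \<noteq> []" by (rule normalize_nonzero[of "q j0"]) (use ij0 \<open>q j0 \<noteq> \<zero>\<close> in auto)
  moreover have "eval ?P y = \<zero>"
  proof -
    have "eval ?P y = eval (rev (map q [0..<m])) y"
      by (rule eval_normalize) (use qc xy in auto)
    also have "\<dots> = (\<Oplus>j\<in>{..<m}. q j \<otimes> y [^] j)" by (rule eval_rev_map) (use qc xy in auto)
    also have "\<dots> = \<zero>" using C(3) unfolding q_def .
    finally show ?thesis .
  qed
  ultimately show ?thesis unfolding F1_def[symmetric] using algebraicI by blast
qed

end


context field begin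

lemma frac_subfield:
  assumes S: "subring S R"
  shows "subfield {q \<in> carrier R. \<exists>v\<in>S. v \<noteq> \<zero> \<and> v \<otimes> q \<in> S} R"
    (is "subfield ?Q R")
proof -
  have Sc: "S \<subseteq> carrier R" using subringE(1)[OF S] .
  note SE = subringE[OF S]
  show ?thesis
  proof (rule subfieldI'[OF subringI])
    show "?Q \<subseteq> carrier R" by auto
    show "\<one> \<in> ?Q" using SE(3) by (auto intro!: bexI[of _ \<one>])
  next
    fix h assume "h \<in> ?Q"
    then obtain v where v: "v \<in> S" "v \<noteq> \<zero>" "v \<otimes> h \<in> S" "h \<in> carrier R" by auto
    have "v \<otimes> (\<ominus> h) = \<ominus> (v \<otimes> h)" using v Sc by (simp add: r_minus subsetD)
    then show "\<ominus> h \<in> ?Q" using v SE(5) by (auto intro!: bexI[of _ v])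
  next
    fix h1 h2 assume "h1 \<in> ?Q" "h2 \<in> ?Q"
    then obtain v1 v2 where v: "v1 \<in> S" "v1 \<noteq> \<zero>" "v1 \<otimes> h1 \<in> S" "h1 \<in> carrier R"
        "v2 \<in> S" "v2 \<noteq> \<zero>" "v2 \<otimes> h2 \<in> S" "h2 \<in> carrier R" by auto
    have vc: "v1 \<in> carrier R" "v2 \<in> carrier R" using v Sc by auto
    have nz: "v1 \<otimes> v2 \<noteq> \<zero>" using v vc integral_iff by auto
    have vS: "v1 \<otimes> v2 \<in> S" using SE(6) v by auto
    have "(v1 \<otimes> v2) \<otimes> (h1 \<otimes> h2) = (v1 \<otimes> h1) \<otimes> (v2 \<otimes> h2)" using v vc by (simp add: m_ac)
    then show "h1 \<otimes> h2 \<in> ?Q" using nz vS SE(6) v by (auto intro!: bexI[of _ "v1 \<otimes> v2"])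
    have "(v1 \<otimes> v2) \<otimes> (h1 \<oplus> h2) = v2 \<otimes> (v1 \<otimes> h1) \<oplus> v1 \<otimes> (v2 \<otimes> h2)"
      using v vc by (simp add: m_ac r_distr)
    then show "h1 \<oplus> h2 \<in> ?Q" using nz vS SE(6,7) v by (auto intro!: bexI[of _ "v1 \<otimes> v2"])
  next
    fix h assume "h \<in> ?Q - {\<zero>}"
    then obtain v where v: "v \<in> S" "v \<noteq> \<zero>" "v \<otimes> h \<in> S" "h \<in> carrier R" "h \<noteq> \<zero>" by auto
    have vc: "v \<in> carrier R" using v Sc by auto
    have hU: "h \<in> Units R" using v field_Units by auto
    have "(v \<otimes> h) \<otimes> inv h = v" using v vc hU by (simp add: m_assoc)
    moreover have "v \<otimes> h \<noteq> \<zero>" using v vc integral_iff by auto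
    ultimately show "inv h \<in> ?Q" using v hU by (auto intro!: bexI[of _ "v \<otimes> h"])
  qed
qed

lemma clear_denoms:
  assumes S: "subring S R" and P: "set P \<subseteq> {q \<in> carrier R. \<exists>v\<in>S. v \<noteq> \<zero> \<and> v \<otimes> q \<in> S}"
  shows "\<exists>V\<in>S. V \<noteq> \<zero> \<and> (\<forall>c\<in>set P. V \<otimes> c \<in> S)"
  using P
proof (induction P)
  case Nil then show ?case using subringE(3)[OF S] by (auto intro!: bexI[of _ \<one>])
next
  case (Cons c P)
  have Sc: "S \<subseteq> carrier R" using subringE(1)[OF S] .
  obtain V where V: "V \<in> S" "V \<noteq> \<zero>" "\<forall>c\<in>set P. V \<otimes> c \<in> S" using Cons by auto
  obtain v where v: "v \<in> S" "v \<noteq> \<zero>" "v \<otimes> c \<in> S" "c \<in> carrier R" using Cons.prems by auto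
  have c: "V \<in> carrier R" "v \<in> carrier R" using V v Sc by auto
  have "v \<otimes> V \<in> S" using subringE(6)[OF S] V v by auto
  moreover have "v \<otimes> V \<noteq> \<zero>" using V v c integral_iff by auto
  moreover have "(v \<otimes> V) \<otimes> c \<in> S"
  proof -
    have "(v \<otimes> V) \<otimes> c = V \<otimes> (v \<otimes> c)" using c v by (simp add: m_ac)
    then show ?thesis using subringE(6)[OF S] V v by auto
  qed
  moreover have "(v \<otimes> V) \<otimes> d \<in> S" if "d \<in> set P" for d
  proof -
    have "d \<in> carrier R" using that Cons.prems by auto
    then have "(v \<otimes> V) \<otimes> d = v \<otimes> (V \<otimes> d)" using c by (simp add: m_assoc)
    then show ?thesis using subringE(6)[OF S] V v that by auto
  qed
  ultimately show ?case by (auto intro!: bexI[of _ "v \<otimes> V"])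
qed

lemma alg_rel2:
  assumes k: "subfield k R" and xy: "x \<in> carrier R" "y \<in> carrier R"
    and alg: "(algebraic over (generate_field R (insert x k))) y"
  shows "rel2 k x y"
proof -
  have kc: "k \<subseteq> carrier R" using subfieldE(3)[OF k] .
  define S where "S = simple_extension k x"
  have S: "subring S R" unfolding S_def using simple_extension_is_subring[OF subfieldE(1)[OF k] xy(1)] .
  have Sc: "S \<subseteq> carrier R" using subringE(1)[OF S] .
  define Q where "Q = {q \<in> carrier R. \<exists>v\<in>S. v \<noteq> \<zero> \<and> v \<otimes> q \<in> S}"
  have Q: "subfield Q R" unfolding Q_def using frac_subfield[OF S] .
  have SQ: "S \<subseteq> Q" unfolding Q_def using Sc subringE(3,6)[OF S] by (auto intro!: bexI[of _ \<one>])
  have "insert x k \<subseteq> S" unfolding S_def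
    using simple_extension_incl[OF kc xy(1)] simple_extension_mem[OF subfieldE(1)[OF k] xy(1)] by auto
  hence "insert x k \<subseteq> Q" using SQ by blast
  hence F1Q: "generate_field R (insert x k) \<subseteq> Q"
    using generate_field_min_subfield1[OF _ Q, of "insert x k"] kc xy by blast
  have F1: "subfield (generate_field R (insert x k)) R" using generate_field_is_subfield kc xy by auto
  obtain P where P: "P \<in> carrier ((generate_field R (insert x k))[X])" "P \<noteq> []" "eval P y = \<zero>"
    using algebraicE[OF subfieldE(1)[OF F1] xy(2) alg] by blast
  have setP: "set P \<subseteq> Q" using P(1) F1Q polynomial_incl unfolding sym[OF univ_poly_carrier] by blast
  have Pc: "set P \<subseteq> carrier R" using setP Q_def by auto
  obtain V where V: "V \<in> S" "V \<noteq> \<zero>" "\<forall>c\<in>set P. V \<otimes> c \<in> S"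
    using clear_denoms[OF S setP[unfolded Q_def]] by blast
  have Vc: "V \<in> carrier R" using V Sc by auto
  define w where "w j = V \<otimes> coeff P j" for j
  have wS: "w j \<in> S" for j
  proof (cases "j < length P")
    case True
    then have "coeff P j \<in> set P" using coeff_img_restrict[of P] by blast
    then show ?thesis unfolding w_def using V by auto
  next
    case False
    then have "w j = \<zero>" unfolding w_def using coeff_length[of P j] Vc by auto
    then show ?thesis using subringE(2)[OF S] by simp
  qed
  have "\<forall>j. \<exists>p. p \<in> carrier (k[X]) \<and> eval p x = w j"
  proof
    fix j have "w j \<in> (\<lambda>p. eval p x) ` carrier (k[X])"
      using wS[of j] simple_extension_as_eval_img[OF kc xy(1)] unfolding S_def by simp
    then show "\<exists>p. p \<in> carrier (k[X]) \<and> eval p x = w j" by (auto simp del: eval.simps)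
  qed
  then obtain pp where pp: "\<And>j. pp j \<in> carrier (k[X])" "\<And>j. eval (pp j) x = w j" by metis
  have ppk: "set (pp j) \<subseteq> k" for j using pp(1)[of j] polynomial_incl unfolding sym[OF univ_poly_carrier] by blast
  have ppc: "set (pp j) \<subseteq> carrier R" for j using ppk kc by blast
  define lp where "lp = length P"
  define n where "n = (\<Sum>j<lp. length (pp j))"
  have nle: "length (pp j) \<le> n" if "j < lp" for j
    unfolding n_def by (rule member_le_sum[of j "{..<lp}" "\<lambda>j. length (pp j)", simplified]) (use that in auto)
  define C where "C i j = coeff (pp j) i" for i j
  have Ck: "C i j \<in> k" for i j
  proof -
    have "C i j \<in> set (pp j) \<union> {\<zero>}" unfolding C_def using coeff_img(3)[of "pp j"] by blast
    then show ?thesis using ppk[of j] subringE(2)[OF subfieldE(1)[OF k]] by auto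
  qed
  have Cc: "C i j \<in> carrier R" for i j using Ck kc by blast
  have inner: "(\<Oplus>i\<in>{..<n}. C i j \<otimes> x [^] i) = w j" if "j < lp" for j
  proof -
    have "(\<Oplus>i\<in>{..<n}. C i j \<otimes> x [^] i) = (\<Oplus>i\<in>{..<length (pp j)}. C i j \<otimes> x [^] i)"
      by (rule finsum_extend_zero) (use nle[OF that] xy Cc in \<open>auto simp: C_def coeff_length\<close>)
    also have "\<dots> = eval (pp j) x" unfolding C_def using eval_coeff_sum[OF ppc xy(1)] by simp
    finally show ?thesis using pp(2) by simp
  qed
  have cP: "coeff P j \<in> carrier R" for j using coeff_in_carrier[OF Pc] .
  have sum0: "(\<Oplus>j\<in>{..<lp}. (\<Oplus>i\<in>{..<n}. C i j \<otimes> x [^] i) \<otimes> y [^] j) = \<zero>"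
  proof -
    have "(\<Oplus>j\<in>{..<lp}. (\<Oplus>i\<in>{..<n}. C i j \<otimes> x [^] i) \<otimes> y [^] j) = (\<Oplus>j\<in>{..<lp}. V \<otimes> (coeff P j \<otimes> y [^] j))"
      by (rule finsum_cong') (use inner xy Vc cP in \<open>auto simp: w_def m_assoc\<close>)
    also have "\<dots> = V \<otimes> (\<Oplus>j\<in>{..<lp}. coeff P j \<otimes> y [^] j)"
      by (rule finsum_rdistr[symmetric]) (use Vc cP xy in auto)
    also have "\<dots> = V \<otimes> eval P y" unfolding lp_def using eval_coeff_sum[OF Pc xy(2)] by simp
    finally show ?thesis using P(3) Vc by simp
  qed
  define j0 where "j0 = lp - 1"
  have j0: "j0 < lp" unfolding j0_def lp_def using P(2) by (cases P) auto
  have "hd P \<noteq> \<zero>" using P(1) P(2) unfolding sym[OF univ_poly_carrier] polynomial_def by auto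
  moreover have "coeff P j0 = hd P" unfolding j0_def lp_def using lead_coeff_simp[OF P(2)] by simp
  ultimately have wj0: "w j0 \<noteq> \<zero>" unfolding w_def using Vc integral_iff[of V "hd P"] V(2) cP[of j0] by auto
  have "\<exists>i<n. C i j0 \<noteq> \<zero>"
  proof (rule ccontr)
    assume "\<not> ?thesis"
    then have "(\<Oplus>i\<in>{..<n}. C i j0 \<otimes> x [^] i) = (\<Oplus>i\<in>{..<n}. \<zero>)"
      by (intro finsum_cong') (auto simp: xy)
    then show False using inner[OF j0] wj0 by (simp add: finsum_zero)
  qed
  then show ?thesis unfolding rel2_def using Ck sum0 j0
    by (intro exI[of _ C] exI[of _ n] exI[of _ lp]) blast
qed

end


context field begin

lemma dep2:
  assumes k: "subfield k R" and a: "a \<in> carrier R" and s: "s1 \<in> carrier R" "s2 \<in> carrier R"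
    and alg: "(algebraic over (generate_field R (insert a k))) s1"
             "(algebraic over (generate_field R (insert a k))) s2"
  shows "rel2 k s1 s2"
proof -
  have kc: "k \<subseteq> carrier R" using subfieldE(3)[OF k] .
  have ks: "k \<subseteq> generate_field R (insert s k)" for s by (auto intro: generate_field.incl)
  show ?thesis
  proof (cases "(algebraic over k) s2")
    case True
    then have "(algebraic over (generate_field R (insert s1 k))) s2" using algebraic_mono[OF ks] by blast
    then show ?thesis using alg_rel2[OF k s] by blast
  next
    case F2: False
    show ?thesis
    proof (cases "(algebraic over k) s1")
      case True
      then have "(algebraic over (generate_field R (insert s2 k))) s1" using algebraic_mono[OF ks] by blast
      then have "rel2 k s2 s1" using alg_rel2[OF k s(2) s(1)] by blast
      then show ?thesis using rel2_sym[OF k s(2) s(1)] by blast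
    next
      case False
      then have tr: "(transcendental over k) s1" unfolding over_def by simp
      have "rel2 k a s1" using alg_rel2[OF k a s(1) alg(1)] .
      then have "rel2 k s1 a" using rel2_sym[OF k a s(1)] by blast
      then have aa: "(algebraic over (generate_field R (insert s1 k))) a"
        using rel2_alg[OF k s(1) a _ tr] by blast
      have F1: "subfield (generate_field R (insert s1 k)) R" using generate_field_is_subfield kc s by auto
      have "(algebraic over (generate_field R (insert s1 k))) s2"
        using tower_alg[OF F1 k ks a aa s(2) alg(2)] .
      then show ?thesis using alg_rel2[OF k s] by blast
    qed
  qed
qed

lemma finsum_Times:
  fixes f :: "'c \<times> 'd \<Rightarrow> 'a"
  assumes "finite A" "finite B" "\<And>p. f p \<in> carrier R"
  shows "finsum R f (A \<times> B) = (\<Oplus>a\<in>A. \<Oplus>b\<in>B. f (a, b))"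
  using assms(1)
proof (induction A rule: finite_induct)
  case empty then show ?case by simp
next
  case (insert a A)
  have "insert a A \<times> B = (Pair a ` B) \<union> (A \<times> B)" by auto
  moreover have "(Pair a ` B) \<inter> (A \<times> B) = {}" using insert by auto
  ultimately have "finsum R f (insert a A \<times> B) = finsum R f (Pair a ` B) \<oplus> finsum R f (A \<times> B)"
    using finsum_Un_disjoint[of "Pair a ` B" "A \<times> B" f] assms insert by auto
  also have "finsum R f (Pair a ` B) = (\<Oplus>b\<in>B. f (a, b))"
    by (subst finsum_reindex) (auto simp: assms inj_on_def)
  also have "(\<Oplus>b\<in>B. f (a, b)) \<oplus> finsum R f (A \<times> B) = (\<Oplus>a\<in>insert a A. \<Oplus>b\<in>B. f (a, b))"
    using insert by (subst finsum_insert) (auto simp: assms)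
  finally show ?case .
qed

lemma not_alg_indep:
  assumes k: "subfield k R" and S: "S \<subseteq> carrier R" "finite S" "s1 \<in> S" "s2 \<in> S" "s1 \<noteq> s2"
    and r: "rel2 k s1 s2"
  shows "\<not> alg_indep R k S"
proof -
  obtain C :: "nat \<Rightarrow> nat \<Rightarrow> 'a" and n m :: nat where C: "\<forall>i j. C i j \<in> k" "\<exists>i<n. \<exists>j<m. C i j \<noteq> \<zero>"
     "(\<Oplus>j\<in>{..<m}. (\<Oplus>i\<in>{..<n}. C i j \<otimes> s1 [^] i) \<otimes> s2 [^] j) = \<zero>"
    using r unfolding rel2_def by blast
  have kc: "k \<subseteq> carrier R" using subfieldE(3)[OF k] .
  have Cc: "\<And>i j. C i j \<in> carrier R" using C(1) kc by auto
  have sc: "s1 \<in> carrier R" "s2 \<in> carrier R" using S by auto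
  define ee where "ee = (\<lambda>(i::nat, j::nat) (s::'a). if s = s1 then i else if s = s2 then j else 0)"
  define E where "E = ee ` ({..<n} \<times> {..<m})"
  define c where "c e = C (e s1) (e s2)" for e :: "'a \<Rightarrow> nat"
  have inj: "inj_on ee ({..<n} \<times> {..<m})"
  proof (rule inj_onI)
    fix p q assume "ee p = ee q"
    then have "ee p s1 = ee q s1" "ee p s2 = ee q s2" by auto
    then show "p = q" using S(5) by (cases p, cases q) (auto simp: ee_def)
  qed
  have prod: "finprod R (\<lambda>s. s [^] (ee p s)) S = s1 [^] fst p \<otimes> s2 [^] snd p" for p
  proof -
    obtain i j where p: "p = (i, j)" by (cases p)
    have S': "S = insert s1 (insert s2 (S - {s1, s2}))" using S by auto
    have fin: "finite (S - {s1, s2})" using S by auto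
    have rest: "finprod R (\<lambda>s. s [^] (ee p s)) (S - {s1, s2}) = \<one>"
    proof -
      have "finprod R (\<lambda>s. s [^] (ee p s)) (S - {s1, s2}) = finprod R (\<lambda>s. \<one>) (S - {s1, s2})"
        by (rule finprod_cong') (auto simp: p ee_def)
      then show ?thesis by simp
    qed
    have cf: "(\<lambda>s. s [^] (ee p s)) \<in> A \<rightarrow> carrier R" if "A \<subseteq> carrier R" for A using that by auto
    have "finprod R (\<lambda>s. s [^] (ee p s)) S
        = s1 [^] (ee p s1) \<otimes> (s2 [^] (ee p s2) \<otimes> finprod R (\<lambda>s. s [^] (ee p s)) (S - {s1, s2}))"
      apply (subst S')
      apply (subst finprod_insert)
      using fin S sc cf apply auto[4]
      apply (subst finprod_insert)
      using fin S sc cf apply auto[4]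
      by simp
    also have "\<dots> = s1 [^] i \<otimes> s2 [^] j" using rest S(5) sc by (simp add: p ee_def)
    finally show ?thesis by (simp add: p)
  qed
  have "finsum R (\<lambda>e. c e \<otimes> finprod R (\<lambda>s. s [^] (e s)) S) E
      = finsum R (\<lambda>p. c (ee p) \<otimes> finprod R (\<lambda>s. s [^] (ee p s)) S) ({..<n} \<times> {..<m})"
    unfolding E_def
  proof (rule finsum_reindex[OF _ inj])
    show "(\<lambda>e. c e \<otimes> finprod R (\<lambda>s. s [^] e s) S) \<in> ee ` ({..<n} \<times> {..<m}) \<rightarrow> carrier R"
    proof
      fix e assume "e \<in> ee ` ({..<n} \<times> {..<m})"
      have "finprod R (\<lambda>s. s [^] e s) S \<in> carrier R"
        by (rule finprod_closed) (use S(1) in auto)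
      then show "c e \<otimes> finprod R (\<lambda>s. s [^] e s) S \<in> carrier R" by (simp add: c_def Cc)
    qed
  qed
  also have "\<dots> = finsum R (\<lambda>p. C (fst p) (snd p) \<otimes> (s1 [^] fst p \<otimes> s2 [^] snd p)) ({..<n} \<times> {..<m})"
  proof (rule finsum_cong')
    fix p assume "p \<in> {..<n} \<times> {..<m}"
    have "c (ee p) = C (fst p) (snd p)" using S(5) by (cases p) (auto simp: c_def ee_def)
    then show "c (ee p) \<otimes> finprod R (\<lambda>s. s [^] (ee p s)) S = C (fst p) (snd p) \<otimes> (s1 [^] fst p \<otimes> s2 [^] snd p)"
      using prod by simp
  qed (auto simp: Cc sc)
  also have "\<dots> = (\<Oplus>i\<in>{..<n}. \<Oplus>j\<in>{..<m}. C i j \<otimes> (s1 [^] i \<otimes> s2 [^] j))"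
    by (subst finsum_Times) (auto simp: Cc sc)
  also have "\<dots> = (\<Oplus>i\<in>{..<n}. \<Oplus>j\<in>{..<m}. C i j \<otimes> s1 [^] i \<otimes> s2 [^] j)"
    by (intro finsum_cong') (auto simp: Cc sc m_assoc)
  also have "\<dots> = (\<Oplus>j\<in>{..<m}. \<Oplus>i\<in>{..<n}. C i j \<otimes> s1 [^] i \<otimes> s2 [^] j)"
    by (rule finsum_swap[symmetric]) (auto simp: Cc sc)
  also have "\<dots> = \<zero>" using C(3) rel2_expand[where C=C and x=s1 and y=s2 and n=n and m=m] Cc sc by simp
  finally have sum0: "finsum R (\<lambda>e. c e \<otimes> finprod R (\<lambda>s. s [^] (e s)) S) E = \<zero>" .
  obtain i0 j0 where ij0: "i0 < n" "j0 < m" "C i0 j0 \<noteq> \<zero>" using C(2) by blast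
  have "ee (i0, j0) \<in> E" unfolding E_def using ij0 by auto
  moreover have "c (ee (i0, j0)) \<noteq> \<zero>" using ij0 S(5) by (simp add: c_def ee_def)
  moreover have "finite E" unfolding E_def by simp
  moreover have "\<forall>e\<in>E. \<forall>x. x \<notin> S \<longrightarrow> e x = 0" unfolding E_def ee_def using S by auto
  moreover have "c \<in> E \<rightarrow> k" using C(1) by (auto simp: c_def)
  ultimately show ?thesis unfolding alg_indep_def using sum0 by blast
qed

lemma trdeg_le1:
  assumes k: "subfield k R" and a: "a \<in> carrier R" and K0: "K0 \<subseteq> carrier R"
    and alg: "\<And>x. x \<in> K0 \<Longrightarrow> (algebraic over (generate_field R (insert a k))) x"
  shows "trdeg R k K0 \<le> 1"
  unfolding trdeg_def
proof (rule SUP_least)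
  fix S assume "S \<in> {S. S \<subseteq> K0 \<and> alg_indep R k S}"
  then have S: "S \<subseteq> K0" "alg_indep R k S" by auto
  have fin: "finite S" using S(2) unfolding alg_indep_def by auto
  have "card S \<le> Suc 0"
  proof (rule ccontr)
    assume "\<not> card S \<le> Suc 0"
    then obtain s1 s2 where "s1 \<in> S" "s2 \<in> S" "s1 \<noteq> s2" using card_le_Suc0_iff_eq[OF fin] by blast
    moreover have "rel2 k s1 s2" using dep2[OF k a] alg S(1) K0 calculation by blast
    ultimately show False using not_alg_indep[OF k _ fin] S K0 by blast
  qed
  then show "enat (card S) \<le> 1" by (simp add: one_enat_def)
qed

end


context field begin

lemma subfield_Int:
  assumes "subfield A R" "subfield B R" shows "subfield (A \<inter> B) R"
proof (rule subfieldI'[OF subringI])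
  note a = subringE[OF subfieldE(1)[OF assms(1)]] and b = subringE[OF subfieldE(1)[OF assms(2)]]
  show "A \<inter> B \<subseteq> carrier R" using a(1) by auto
  show "\<one> \<in> A \<inter> B" using a(3) b(3) by auto
  show "\<And>h. h \<in> A \<inter> B \<Longrightarrow> \<ominus> h \<in> A \<inter> B" using a(5) b(5) by auto
  show "\<And>h1 h2. h1 \<in> A \<inter> B \<Longrightarrow> h2 \<in> A \<inter> B \<Longrightarrow> h1 \<otimes> h2 \<in> A \<inter> B" using a(6) b(6) by auto
  show "\<And>h1 h2. h1 \<in> A \<inter> B \<Longrightarrow> h2 \<in> A \<inter> B \<Longrightarrow> h1 \<oplus> h2 \<in> A \<inter> B" using a(7) b(7) by auto
  show "\<And>k. k \<in> A \<inter> B - {\<zero>} \<Longrightarrow> inv k \<in> A \<inter> B"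
    using subfield_m_inv(1)[OF assms(1)] subfield_m_inv(1)[OF assms(2)] by auto
qed

lemma split_coeffs:
  assumes spl: "\<And>P. P \<in> carrier (poly_ring R) \<Longrightarrow> splitted P" and A: "subfield A R"
  shows "g \<in> carrier (poly_ring R) \<Longrightarrow> g \<noteq> [] \<Longrightarrow> lead_coeff g = \<one> \<Longrightarrow> (\<And>r. is_root g r \<Longrightarrow> r \<in> A)
         \<Longrightarrow> set g \<subseteq> A"
proof (induction "degree g" arbitrary: g)
  case 0
  then obtain c where "g = [c]" by (cases g) auto
  then show ?case using 0 subringE(3)[OF subfieldE(1)[OF A]] by auto
next
  case (Suc d)
  have "size (roots g) = Suc d" using spl[OF Suc.prems(1)] Suc.hyps(2) unfolding splitted_def by simp
  then have "roots g \<noteq> {#}" by auto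
  then obtain r where r: "r \<in> carrier R" "r \<in># roots g" "[ \<one>, \<ominus> r ] \<in> carrier (poly_ring R)"
      "[ \<one>, \<ominus> r ] pdivides g"
    using not_empty_rootsE[OF Suc.prems(1) \<open>roots g \<noteq> {#}\<close>] by blast
  have "is_root g r" using roots_mem_iff_is_root[OF Suc.prems(1)] r(2) by simp
  then have rA: "r \<in> A" using Suc.prems(4) by blast
  obtain q where q: "q \<in> carrier (poly_ring R)" "g = poly_mult [ \<one>, \<ominus> r ] q"
    using r(4) unfolding pdivides_def factor_def univ_poly_mult by auto
  have sub: "subring (carrier R) R" by (rule carrier_is_subring)
  have pl: "polynomial (carrier R) [ \<one>, \<ominus> r ]" "polynomial (carrier R) q"
    using r(3) q(1) unfolding univ_poly_carrier by auto
  have qne: "q \<noteq> []"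
  proof
    assume "q = []"
    moreover have "set [ \<one>, \<ominus> r ] \<subseteq> carrier R" using r(1) by auto
    ultimately have "g = []" using q(2) poly_mult_zero(2) by metis
    then show False using Suc.prems(2) by simp
  qed
  have "degree g = Suc (degree q)" using poly_mult_degree_eq[OF sub pl] q(2) qne by simp
  then have dq: "d = degree q" using Suc.hyps(2) by simp
  have lgq: "lead_coeff g = \<one> \<otimes> lead_coeff q" using poly_mult_lead_coeff[OF sub pl] q(2) qne by simp
  have lq: "lead_coeff q = \<one>"
  proof -
    have "lead_coeff q \<in> carrier R" using polynomial_incl[OF pl(2)] qne by (cases q) auto
    then show ?thesis using \<open>lead_coeff g = \<one> \<otimes> lead_coeff q\<close> Suc.prems(3) by simp
  qed
  have "r' \<in> A" if "is_root q r'" for r'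
  proof -
    have r': "r' \<in> carrier R" "eval q r' = \<zero>" using that unfolding is_root_def by auto
    have "eval g r' = eval [ \<one>, \<ominus> r ] r' \<otimes> eval q r'"
      unfolding q(2) by (rule eval_poly_mult) (use r(1) r' pl(2) polynomial_incl in auto)
    then have "eval g r' = \<zero>" using r' r(1) by simp
    then have "is_root g r'" unfolding is_root_def using r' Suc.prems(2) by simp
    then show ?thesis using Suc.prems(4) by blast
  qed
  then have qA: "set q \<subseteq> A" using Suc.hyps(1)[OF dq q(1) qne lq] by blast
  have "polynomial A [ \<one>, \<ominus> r ]" using rA subringE(3,5)[OF subfieldE(1)[OF A]]
    unfolding polynomial_def by auto
  moreover have "polynomial A q" using qA lq unfolding polynomial_def by auto
  ultimately have "polynomial A g" unfolding q(2) using poly_mult_closed[OF subfieldE(1)[OF A]] by blast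
  then show ?case using polynomial_incl by blast
qed

end


context field begin

lemma step_ext:
  assumes spl: "\<And>P. P \<in> carrier (poly_ring R) \<Longrightarrow> splitted P"
    and k: "subfield k R" and F: "subfield F R" and kF: "k \<subseteq> F" and a: "a \<in> F"
    and lam: "lam \<in> carrier R" and algF: "(algebraic over F) lam"
    and alga: "(algebraic over (generate_field R (insert a k))) lam"
  shows "fin_ext R F (generate_field R (insert lam F)) \<and> ed R k F (generate_field R (insert lam F)) \<le> 1"
proof -
  have Fc: "F \<subseteq> carrier R" using subfieldE(3)[OF F] .
  have kc: "k \<subseteq> carrier R" using subfieldE(3)[OF k] .
  have ac: "a \<in> carrier R" using a Fc by auto
  define L where "L = generate_field R (insert lam F)"
  have L: "L = simple_extension F lam" unfolding L_def using gen_simple[OF F lam algF] .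
  define ka where "ka = generate_field R (insert a k)"
  have ka: "subfield ka R" unfolding ka_def using generate_field_is_subfield kc ac by auto
  have kaF: "ka \<subseteq> F" unfolding ka_def using generate_field_min_subfield1[OF _ F] kF a kc ac by auto
  define A where "A = {x \<in> carrier R. (algebraic over ka) x}"
  have A: "subfield A R" unfolding A_def using subfield_of_algebraics[OF ka] .
  define K0 where "K0 = F \<inter> A"
  have K0: "subfield K0 R" unfolding K0_def using subfield_Int[OF F A] .
  have K0F: "K0 \<subseteq> F" unfolding K0_def by auto
  have kK0: "k \<subseteq> K0"
  proof -
    have "k \<subseteq> ka" unfolding ka_def by (auto intro: generate_field.incl)
    then have "k \<subseteq> A" unfolding A_def using algebraic_self[OF subfieldE(1)[OF ka]] kc by auto
    then show ?thesis unfolding K0_def using kF by auto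
  qed
  define g where "g = Irr F lam"
  note gE = IrrE[OF F lam algF, folded g_def]
  have gne: "g \<noteq> []" using gE(1-2) unfolding ring_irreducible_def univ_poly_zero by auto
  have gR: "g \<in> carrier (poly_ring R)" using carrier_polynomial_shell[OF subfieldE(1)[OF F] gE(1)] .
  have roots: "r \<in> A" if "is_root g r" for r
  proof -
    have r: "r \<in> carrier R" "eval g r = \<zero>" using that unfolding is_root_def by auto
    define h where "h = Irr ka lam"
    note hE = IrrE[OF ka lam alga[folded ka_def], folded h_def]
    have hne: "h \<noteq> []" using hE(1-2) unfolding ring_irreducible_def univ_poly_zero by auto
    have hF: "h \<in> carrier (F[X])" using hE(1) kaF unfolding sym[OF univ_poly_carrier] polynomial_def by auto
    have "g pdivides h" using Irr_minimal[OF F lam algF hF hE(4)] unfolding g_def .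
    then obtain q where q: "q \<in> carrier (poly_ring R)" "h = poly_mult g q"
      unfolding pdivides_def factor_def univ_poly_mult by auto
    have "eval h r = eval g r \<otimes> eval q r"
      unfolding q(2) by (rule eval_poly_mult) (use r gR q(1) polynomial_incl in \<open>auto simp: univ_poly_carrier[symmetric]\<close>)
    then have "eval h r = \<zero>" using r q(1) polynomial_incl[of "carrier R" q] eval_in_carrier
      by (auto simp: univ_poly_carrier[symmetric])
    then have "(algebraic over ka) r" using algebraicI[OF hE(1) hne] by blast
    then show ?thesis unfolding A_def using r by auto
  qed
  have gA: "set g \<subseteq> A" using split_coeffs[OF spl A gR gne gE(3) roots] by blast
  have gF: "set g \<subseteq> F" using gE(1) polynomial_incl unfolding sym[OF univ_poly_carrier] by blast
  have gK0: "g \<in> carrier (K0[X])" unfolding sym[OF univ_poly_carrier] polynomial_def K0_def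
    using gA gF gE(3) by auto
  have algK0: "(algebraic over K0) lam" using algebraicI[OF gK0 gne gE(4)] .
  define g0 where "g0 = Irr K0 lam"
  note g0E = IrrE[OF K0 lam algK0, folded g0_def]
  have g0ne: "g0 \<noteq> []" using g0E(1-2) unfolding ring_irreducible_def univ_poly_zero by auto
  have g0F: "g0 \<in> carrier (F[X])" using g0E(1) K0F unfolding sym[OF univ_poly_carrier] polynomial_def by auto
  have d1: "degree g0 \<le> degree g"
    using pdivides_imp_degree_le[OF subfieldE(1)[OF K0] g0E(1) gK0 gne]
      Irr_minimal[OF K0 lam algK0 gK0 gE(4)] unfolding g0_def by blast
  have d2: "degree g \<le> degree g0"
    using pdivides_imp_degree_le[OF subfieldE(1)[OF F] gE(1) g0F g0ne]
      Irr_minimal[OF F lam algF g0F g0E(4)] unfolding g_def by blast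
  have deq: "degree g0 = degree g" using d1 d2 by simp
  define bs where "bs = exp_base lam (degree g)"
  define B where "B = simple_extension K0 lam"
  have B: "subfield B R" unfolding B_def using simple_extension_is_subfield[OF K0 lam] algK0 by simp
  have spanK0: "Span K0 bs = B" unfolding bs_def B_def using Span_exp_base[OF K0 lam algK0] deq g0_def by simp
  have indK0: "independent K0 bs" unfolding bs_def using exp_base_independent[OF K0 lam algK0] deq g0_def by simp
  have spanF: "Span F bs = L" unfolding bs_def L using Span_exp_base[OF F lam algF] g_def by simp
  have indF: "independent F bs" unfolding bs_def using exp_base_independent[OF F lam algF] g_def by simp
  have bsc: "set bs \<subseteq> carrier R" unfolding bs_def using exp_base_closed[OF lam] .
  have desc: "descends R F L K0"
    unfolding descends_def
  proof (intro exI conjI)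
    show "B \<subseteq> L" unfolding B_def L using mono_simple_extension[OF K0F] .
    show "\<one> \<in> B" using subringE(3)[OF subfieldE(1)[OF B]] .
    show "\<forall>x\<in>B. \<forall>y\<in>B. x \<oplus> y \<in> B \<and> x \<otimes> y \<in> B" using subringE(6,7)[OF subfieldE(1)[OF B]] by auto
    have "K0 \<subseteq> B" unfolding B_def using simple_extension_incl[OF subfieldE(3)[OF K0] lam] .
    then show "\<forall>a\<in>K0. \<forall>x\<in>B. a \<otimes> x \<in> B" using subringE(6)[OF subfieldE(1)[OF B]] by auto
    show "set bs \<subseteq> B" using Span_base_incl[OF K0 bsc] spanK0 by simp
    show "independent K0 bs" by (rule indK0)
    show "Span K0 bs = B" by (rule spanK0)
    show "independent F bs" by (rule indF)
    show "Span F bs = L" by (rule spanF)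
  qed
  have fe: "fin_ext R F L" unfolding fin_ext_def
  proof (intro conjI)
    show "subfield F R" by (rule F)
    show "subfield L R" unfolding L using simple_extension_is_subfield[OF F lam] algF by simp
    show "F \<subseteq> L" unfolding L using simple_extension_incl[OF Fc lam] .
    show "finite_dimension F L" unfolding L using finite_dimension_simple_extension[OF F lam] algF by simp
  qed
  have tr: "trdeg R k K0 \<le> 1"
  proof (rule trdeg_le1[OF k ac])
    show "K0 \<subseteq> carrier R" using subfieldE(3)[OF K0] .
    show "\<And>x. x \<in> K0 \<Longrightarrow> (algebraic over generate_field R (insert a k)) x"
      unfolding K0_def A_def ka_def by auto
  qed
  have "ed R k F L \<le> 1" unfolding ed_def
    by (rule INF_lower2[of K0]) (use K0 kK0 K0F desc tr in auto)
  then show ?thesis using fe unfolding L_def by simp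
qed

end


context field begin

definition kpoly :: "nat \<Rightarrow> 'a \<Rightarrow> 'a list" where
  "kpoly n a = \<one> # replicate (n - 1) \<zero> @ [\<ominus> a]"
definition aspoly :: "nat \<Rightarrow> 'a \<Rightarrow> 'a list" where
  "aspoly n a = \<one> # replicate (n - 2) \<zero> @ [\<ominus> \<one>, \<ominus> a]"

lemma kpoly_eval:
  assumes "n \<ge> 1" "a \<in> carrier R" "y \<in> carrier R"
  shows "eval (kpoly n a) y = y [^] n \<ominus> a"
proof -
  have kp: "kpoly n a = monom \<one> (n - 1) @ [\<ominus> a]" unfolding kpoly_def monom_def by simp
  have "eval (monom \<one> (n - 1) @ [\<ominus> a]) y = eval (monom \<one> (n - 1)) y \<otimes> y [^] length [\<ominus> a] \<oplus> eval [\<ominus> a] y"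
    by (rule eval_append) (use assms monom_in_carrier[of \<one>] in auto)
  also have "eval (monom \<one> (n - 1)) y = \<one> \<otimes> y [^] (n - 1)"
    using eval_monom[of \<one> y "n - 1"] assms by simp
  also have "eval [\<ominus> a] y = \<ominus> a" using assms by simp
  finally have "eval (kpoly n a) y = y [^] (n - 1) \<otimes> y \<oplus> \<ominus> a" unfolding kp using assms by simp
  also have "y [^] (n - 1) \<otimes> y = y [^] n" using assms nat_pow_Suc[of y "n - 1"] by simp
  finally show ?thesis by (simp add: minus_eq)
qed

lemma aspoly_eval:
  assumes "n \<ge> 2" "a \<in> carrier R" "y \<in> carrier R"
  shows "eval (aspoly n a) y = y [^] n \<ominus> y \<ominus> a"
proof -
  have kp: "aspoly n a = monom \<one> (n - 2) @ [\<ominus> \<one>, \<ominus> a]" unfolding aspoly_def monom_def by simp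
  have "eval (monom \<one> (n - 2) @ [\<ominus> \<one>, \<ominus> a]) y = eval (monom \<one> (n - 2)) y \<otimes> y [^] length [\<ominus> \<one>, \<ominus> a] \<oplus> eval [\<ominus> \<one>, \<ominus> a] y"
    by (rule eval_append) (use assms monom_in_carrier[of \<one>] in auto)
  also have "eval (monom \<one> (n - 2)) y = \<one> \<otimes> y [^] (n - 2)"
    using eval_monom[of \<one> y "n - 2"] assms by simp
  also have "eval [\<ominus> \<one>, \<ominus> a] y = \<ominus> y \<oplus> \<ominus> a" using assms by (simp add: l_minus)
  finally have "eval (aspoly n a) y = y [^] (n - 2) \<otimes> (y \<otimes> y) \<oplus> (\<ominus> y \<oplus> \<ominus> a)"
    unfolding kp using assms by (simp add: numeral_2_eq_2)
  also have "y [^] (n - 2) \<otimes> (y \<otimes> y) = y [^] n"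
  proof -
    have e: "y [^] (n - 2) \<otimes> y [^] (2::nat) = y [^] (n - 2 + 2)" using nat_pow_mult[of y "n - 2" 2] assms(3) by blast
    have "n - 2 + 2 = n" using assms(1) by simp
    then have "y [^] (n - 2) \<otimes> y [^] (2::nat) = y [^] n" using e by metis
    moreover have "y [^] (2::nat) = y \<otimes> y" using assms by (simp add: numeral_2_eq_2)
    ultimately show ?thesis by metis
  qed
  finally show ?thesis using assms by (simp add: minus_eq a_assoc)
qed

lemma kpoly_carrier:
  assumes "subring S R" "a \<in> S" shows "kpoly n a \<in> carrier (S[X])"
  unfolding kpoly_def sym[OF univ_poly_carrier] polynomial_def
  using subringE(2,3,5)[OF assms(1)] assms(2) by auto

lemma aspoly_carrier:
  assumes "subring S R" "a \<in> S" shows "aspoly n a \<in> carrier (S[X])"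
  unfolding aspoly_def sym[OF univ_poly_carrier] polynomial_def
  using subringE(2,3,5)[OF assms(1)] assms(2) by auto

lemma rad_alg:
  fixes n :: nat
  assumes k: "subfield k R" and a: "a \<in> carrier R" and lam: "lam \<in> carrier R"
    and eq: "(n \<ge> 1 \<and> lam [^] n \<ominus> a = \<zero>) \<or> (n \<ge> 2 \<and> lam [^] n \<ominus> lam \<ominus> a = \<zero>)"
  shows "(algebraic over (generate_field R (insert a k))) lam"
proof -
  have kc: "k \<subseteq> carrier R" using subfieldE(3)[OF k] .
  define ka where "ka = generate_field R (insert a k)"
  have ka: "subring ka R" unfolding ka_def using subfieldE(1)[OF generate_field_is_subfield] kc a by auto
  have aka: "a \<in> ka" unfolding ka_def by (auto intro: generate_field.incl)
  from eq show ?thesis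
  proof
    assume h: "n \<ge> 1 \<and> lam [^] n \<ominus> a = \<zero>"
    show ?thesis unfolding ka_def[symmetric]
      by (rule algebraicI[OF kpoly_carrier[OF ka aka, of n]]) (use h kpoly_eval a lam in \<open>auto simp: kpoly_def\<close>)
  next
    assume h: "n \<ge> 2 \<and> lam [^] n \<ominus> lam \<ominus> a = \<zero>"
    show ?thesis unfolding ka_def[symmetric]
      by (rule algebraicI[OF aspoly_carrier[OF ka aka, of n]]) (use h aspoly_eval a lam in \<open>auto simp: aspoly_def\<close>)
  qed
qed

lemma tower_steps:
  fixes n :: "nat \<Rightarrow> nat" and m :: nat and Ks :: "nat \<Rightarrow> 'a set"
  assumes spl: "\<And>P. P \<in> carrier (poly_ring R) \<Longrightarrow> splitted P"
    and algall: "\<And>x. x \<in> carrier R \<Longrightarrow> (algebraic over K) x"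
    and K: "subfield K R" and k: "subfield k R" "k \<subseteq> K" and K0: "Ks 0 = K"
    and steps: "\<forall>i\<in>{1..m}. lam i \<in> carrier R \<and> a i \<in> Ks (i - 1) \<and>
         Ks i = generate_field R (insert (lam i) (Ks (i - 1))) \<and>
         ((n i \<ge> 1 \<and> lam i [^] n i \<ominus> a i = \<zero>) \<or>
          (n i \<ge> 2 \<and> lam i [^] n i \<ominus> lam i \<ominus> a i = \<zero>))"
  shows "\<forall>i\<in>{1..m}. fin_ext R (Ks (i - 1)) (Ks i) \<and> ed R k (Ks (i - 1)) (Ks i) \<le> 1"
proof -
  have sub: "subfield (Ks i) R \<and> K \<subseteq> Ks i" if "i \<le> m" for i
    using that
  proof (induction i)
    case 0 then show ?case using K K0 by simp
  next
    case (Suc i)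
    then have st: "lam (Suc i) \<in> carrier R" "Ks (Suc i) = generate_field R (insert (lam (Suc i)) (Ks i))"
      using steps by auto
    have IH: "subfield (Ks i) R" "K \<subseteq> Ks i" using Suc by auto
    have ins: "insert (lam (Suc i)) (Ks i) \<subseteq> carrier R" using st(1) subfieldE(3)[OF IH(1)] by auto
    have "subfield (Ks (Suc i)) R" using st(2) generate_field_is_subfield[OF ins] by simp
    moreover have "Ks i \<subseteq> Ks (Suc i)" using st(2) by (auto intro: generate_field.incl)
    ultimately show ?case using IH by auto
  qed
  show ?thesis
  proof
    fix i assume i: "i \<in> {1..m}"
    then have st: "lam i \<in> carrier R" "a i \<in> Ks (i - 1)"
      "Ks i = generate_field R (insert (lam i) (Ks (i - 1)))"
      "(n i \<ge> 1 \<and> lam i [^] n i \<ominus> a i = \<zero>) \<or> (n i \<ge> 2 \<and> lam i [^] n i \<ominus> lam i \<ominus> a i = \<zero>)"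
      using steps by auto
    have "i - 1 \<le> m" using i by auto
    then have F: "subfield (Ks (i - 1)) R" "K \<subseteq> Ks (i - 1)" using sub by auto
    have ac: "a i \<in> carrier R" using st(2) subfieldE(3)[OF F(1)] by auto
    have algF: "(algebraic over (Ks (i - 1))) (lam i)" using algebraic_mono[OF F(2) algall[OF st(1)]] .
    have alga: "(algebraic over (generate_field R (insert (a i) k))) (lam i)"
      using rad_alg[OF k(1) ac st(1) st(4)] .
    show "fin_ext R (Ks (i - 1)) (Ks i) \<and> ed R k (Ks (i - 1)) (Ks i) \<le> 1"
      using step_ext[OF spl k(1) F(1) _ st(2) st(1) algF alga] k(2) F(2) st(3) by auto
  qed
qed

end

theorem corollary6p5:
  fixes \<Omega> :: "('a, 'b) ring_scheme" and k K :: "'a set" and d :: nat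
  assumes "algebraic_closure \<Omega> K"
    and "subfield k \<Omega>" and "k \<subseteq> K"
    and "d \<ge> 1"
    and "closed_at_level \<Omega> k K d"
  shows "perfect \<Omega> K \<and> solvably_closed \<Omega> K"
proof -
  interpret C: algebraic_closure \<Omega> K by (rule assms(1))
  have spl: "\<And>P. P \<in> carrier (poly_ring \<Omega>) \<Longrightarrow> C.splitted P" using C.roots_over_carrier by blast
  have K: "subfield K \<Omega>" by (rule C.subfield_axioms)
  have Kc: "K \<subseteq> carrier \<Omega>" using subfieldE(3)[OF K] .
  have solv: "solvably_closed \<Omega> K"
    unfolding solvably_closed_def
  proof (intro allI impI)
    fix L assume L: "fin_ext \<Omega> K L \<and> solvable_ext \<Omega> K L"
    then obtain m :: nat and Ks :: "nat \<Rightarrow> 'a set" and lam a :: "nat \<Rightarrow> 'a" and n :: "nat \<Rightarrow> nat" where tw: "Ks 0 = K"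
      "\<forall>i\<in>{1..m}. lam i \<in> carrier \<Omega> \<and> a i \<in> Ks (i - 1) \<and>
         Ks i = generate_field \<Omega> (insert (lam i) (Ks (i - 1))) \<and>
         ((n i \<ge> 1 \<and> lam i [^]\<^bsub>\<Omega>\<^esub> n i \<ominus>\<^bsub>\<Omega>\<^esub> a i = \<zero>\<^bsub>\<Omega>\<^esub>) \<or>
          (n i \<ge> 2 \<and> lam i [^]\<^bsub>\<Omega>\<^esub> n i \<ominus>\<^bsub>\<Omega>\<^esub> lam i \<ominus>\<^bsub>\<Omega>\<^esub> a i = \<zero>\<^bsub>\<Omega>\<^esub>))"
      "embeds_over \<Omega> K L (Ks m)"
      unfolding solvable_ext_def by blast
    have steps: "\<forall>i\<in>{1..m}. fin_ext \<Omega> (Ks (i - 1)) (Ks i) \<and> ed \<Omega> k (Ks (i - 1)) (Ks i) \<le> 1"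
      using C.tower_steps[OF spl C.algebraic_extension K assms(2,3) tw(1,2)] by blast
    have "lev \<Omega> k K L \<le> enat 1"
      unfolding lev_def
      by (rule Inf_lower) (use tw(1,3) steps in \<open>auto simp: one_enat_def intro!: exI[of _ 1] exI[of _ m] exI[of _ Ks]\<close>)
    also have "enat 1 \<le> enat d" using assms(4) by simp
    finally have "L \<subseteq> \<Union>{L. fin_ext \<Omega> K L \<and> lev \<Omega> k K L \<le> enat d}" using L by auto
    also have "\<dots> \<subseteq> level_closure \<Omega> k K d" unfolding level_closure_def
      by (auto intro: generate_field.incl)
    also have "\<dots> = K" using assms(5) unfolding closed_at_level_def by simp
    finally show "L = K" using L unfolding fin_ext_def by auto
  qed
  have perf: "perfect \<Omega> K"
    unfolding perfect_def
  proof (intro allI impI ballI)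
    fix p :: nat and x assume p: "prime p \<and> add_pow \<Omega> p \<one>\<^bsub>\<Omega>\<^esub> = \<zero>\<^bsub>\<Omega>\<^esub>" and x: "x \<in> K"
    have p1: "p \<ge> 1" using p prime_gt_0_nat by (auto simp: Suc_le_eq)
    have xc: "x \<in> carrier \<Omega>" using x Kc by auto
    have P: "C.kpoly p x \<in> carrier (poly_ring \<Omega>)"
      using C.kpoly_carrier[OF C.carrier_is_subring xc] .
    have "size (C.roots (C.kpoly p x)) = p"
      using spl[OF P] p1 unfolding C.splitted_def by (simp add: C.kpoly_def)
    then have "C.roots (C.kpoly p x) \<noteq> {#}" using p1 by auto
    then obtain y where y: "y \<in># C.roots (C.kpoly p x)" by blast
    then have "C.is_root (C.kpoly p x) y" using C.roots_mem_iff_is_root[OF P] by simp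
    then have yc: "y \<in> carrier \<Omega>" and ev: "C.eval (C.kpoly p x) y = \<zero>\<^bsub>\<Omega>\<^esub>" unfolding C.is_root_def by auto
    have yx: "y [^]\<^bsub>\<Omega>\<^esub> p \<ominus>\<^bsub>\<Omega>\<^esub> x = \<zero>\<^bsub>\<Omega>\<^esub>" using ev C.kpoly_eval[OF p1 xc yc] by simp
    define L where "L = generate_field \<Omega> (insert y K)"
    define Ks where "Ks = (\<lambda>i::nat. if i = 0 then K else L)"
    have st: "\<forall>i\<in>{1..1::nat}. (\<lambda>_. y) i \<in> carrier \<Omega> \<and> (\<lambda>_. x) i \<in> Ks (i - 1) \<and>
         Ks i = generate_field \<Omega> (insert ((\<lambda>_. y) i) (Ks (i - 1))) \<and>
         (((\<lambda>_. p) i \<ge> 1 \<and> (\<lambda>_. y) i [^]\<^bsub>\<Omega>\<^esub> (\<lambda>_. p) i \<ominus>\<^bsub>\<Omega>\<^esub> (\<lambda>_. x) i = \<zero>\<^bsub>\<Omega>\<^esub>) \<or>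
          ((\<lambda>_. p) i \<ge> 2 \<and> (\<lambda>_. y) i [^]\<^bsub>\<Omega>\<^esub> (\<lambda>_. p) i \<ominus>\<^bsub>\<Omega>\<^esub> (\<lambda>_. y) i \<ominus>\<^bsub>\<Omega>\<^esub> (\<lambda>_. x) i = \<zero>\<^bsub>\<Omega>\<^esub>))"
      using yc x p1 yx by (simp add: Ks_def L_def)
    have LL: "L \<subseteq> carrier \<Omega>" unfolding L_def using C.generate_field_incl yc Kc by auto
    have emb: "embeds_over \<Omega> K L (Ks 1)"
      unfolding embeds_over_def Ks_def
      by (rule exI[of _ "\<lambda>z. z"]) (use LL in \<open>auto intro!: ring_hom_memI simp: L_def generate_field.one\<close>)
    have "solvable_ext \<Omega> K L"
      unfolding solvable_ext_def
      by (rule exI[of _ 1], rule exI[of _ Ks], rule exI[of _ "\<lambda>_. y"], rule exI[of _ "\<lambda>_. x"], rule exI[of _ "\<lambda>_. p"])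
         (intro conjI, simp add: Ks_def, rule st, rule emb)
    moreover have "fin_ext \<Omega> K L"
    proof -
      have alga: "(C.algebraic over (generate_field \<Omega> (insert x k))) y"
        using C.rad_alg[OF assms(2) xc yc, of p] p1 yx by blast
      show ?thesis unfolding L_def
        using C.step_ext[OF spl assms(2) K assms(3) x yc C.algebraic_extension[OF yc] alga] by blast
    qed
    ultimately have "L = K" using solv unfolding solvably_closed_def by blast
    then have yK: "y \<in> K" unfolding L_def by (auto intro: generate_field.incl)
    have "y [^]\<^bsub>\<Omega>\<^esub> p = x"
    proof -
      have yp: "y [^]\<^bsub>\<Omega>\<^esub> p \<in> carrier \<Omega>" using yc by simp
      have "y [^]\<^bsub>\<Omega>\<^esub> p = (y [^]\<^bsub>\<Omega>\<^esub> p \<ominus>\<^bsub>\<Omega>\<^esub> x) \<oplus>\<^bsub>\<Omega>\<^esub> x"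
        using yp xc by (simp add: C.minus_eq C.a_assoc C.l_neg)
      then show ?thesis using yx xc by simp
    qed
    then show "\<exists>y\<in>K. y [^]\<^bsub>\<Omega>\<^esub> p = x" using yK by blast
  qed
  show ?thesis using perf solv by simp
qed

end
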